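(* Assume $m$ satisfies (H1) (for some $n\in\mathbb{N}^\star$), (H2a) and (Osg). Let $\omega_0\in L^1\cap L^\infty(\mathbb{R}^2)$ and let $(u,\omega)$ be the global weak solution of $\partial_t\omega+u\cdot\nabla\omega=0$, $u=\nabla^\perp(-\Delta)^{-1}m(\Lambda)\omega$, $\omega|_{t=0}=\omega_0$, with flow map $\Phi_{t,s}$. If $u\in L^1([0,+\infty);C^1_{\mathrm m}(\mathbb{R}^2))$, then for all $t,s\in\mathbb{R}_+$ and $x\ne y$, $$|\Phi_{t,s}(x)-\Phi_{t,s}(y)|^{-1}\ge\widetilde{\mathsf H}^{-1}\Big(\widetilde{\mathsf H}(|x-y|^{-1})-\Big|\int_s^t\|u(\tau)\|_{C^1_{\mathrm m}}\,\mathrm d\tau\Big|\Big),$$ and $$|\Phi_{t,s}(x)-\Phi_{t,s}(y)|\le|x-y|\exp\Big(\big(m(|x-y|^{-1})+1\big)\Big|\int_s^t\|u(\tau)\|_{C^1_{\mathrm m}}\,\mathrm d\tau\Big|\Big).$$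
   Context: $\nabla^\perp=(\partial_{x_2},-\partial_{x_1})$, $\Lambda=(-\Delta)^{1/2}$, $m(\Lambda)$ the Fourier multiplier with radial symbol $m(|\xi|)$, $m:(0,\infty)\to\mathbb{R}$. (H1) with index $n$: $m\in C^{n+4}(\mathbb{R}_+)$; $m>0$, $m'\ge0$ on $(0,\infty)$; $\lim_{r\to0^+}rm'(r)$ exists; $|\frac{\mathrm d^k}{\mathrm dr^k}m'(r)|\le Cr^{-k}m'(r)$ for $k=1,\dots,n+3$, $r>0$. (H2a): with $\widetilde m(r)=m(e^r)$, there exist $\beta\in[0,+\infty]$, $\beta_1\in[0,\infty)$, $\beta_2\in(-2,\infty)$ with $\lim_{r\to\infty}m(r)=\infty$, $\lim\frac{r(\log r)\widetilde m'(r)}{\widetilde m(r)}=\beta$, $\lim\frac{r\widetilde m'(r)}{\widetilde m(r)}=\beta_1$, $\lim\frac{r\widetilde m''(r)}{\widetilde m'(r)}=\beta_2$ (as $r\to\infty$). (Osg): $\int_2^\infty\frac{\mathrm dr}{r(\log r)m(r)}=+\infty$. Flow map: $\frac{\mathrm d}{\mathrm dt}\Phi_{t,s}(x)=u(\Phi_{t,s}(x),t)$, $\Phi_{s,s}=\mathrm{id}$. $\|f\|_{C^1_{\mathrm m}}=\|f\|_{L^\infty(\mathbb{R}^2)}+\sup_{|x-y|>0}\frac{|f(x)-f(y)|}{|x-y|(m(|x-y|^{-1})+1)}$. $\widetilde{\mathsf H}(r)=\int_{1/r}^1\frac{\mathrm d\rho}{\rho(m(\rho^{-1})+1)}$ for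 $r>0$; it is increasing, and $\widetilde{\mathsf H}^{-1}:\mathbb{R}\to(0,\infty)$ denotes its inverse. *)

theory Defs
  imports "HOL-Analysis.Analysis"
begin

type_synonym pt = "real ^ 2"

definition Ck_on :: "nat \<Rightarrow> real set \<Rightarrow> (real \<Rightarrow> real) \<Rightarrow> bool" where
  "Ck_on k S f \<longleftrightarrow>
     (\<forall>j<k. \<forall>r\<in>S. ((deriv ^^ j) f) differentiable (at r)) \<and>
     continuous_on S ((deriv ^^ k) f)"

definition H1 :: "nat \<Rightarrow> (real \<Rightarrow> real) \<Rightarrow> bool" where
  "H1 n m \<longleftrightarrow>
     Ck_on (n + 4) {0<..} m \<and>
     (\<forall>r>0. m r > 0 \<and> deriv m r \<ge> 0) \<and>
     (\<exists>L. ((\<lambda>r. r * deriv m r) \<longlongrightarrow> L) (at_right 0)) \<and>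
     (\<exists>C. \<forall>k\<in>{1..n+3}. \<forall>r>0.
        \<bar>(deriv ^^ k) (deriv m) r\<bar> \<le> C * r powi (- int k) * deriv m r)"

definition H2a :: "(real \<Rightarrow> real) \<Rightarrow> bool" where
  "H2a m \<longleftrightarrow>
     (let mt = (\<lambda>r. m (exp r)) in
      \<exists>(\<beta>::ereal) (\<beta>1::real) (\<beta>2::real). \<beta> \<ge> 0 \<and> \<beta>1 \<ge> 0 \<and> \<beta>2 > -2 \<and>
        filterlim m at_top at_top \<and>
        ((\<lambda>r. ereal (r * ln r * deriv mt r / mt r)) \<longlongrightarrow> \<beta>) at_top \<and>
        ((\<lambda>r. r * deriv mt r / mt r) \<longlongrightarrow> \<beta>1) at_top \<and>
        ((\<lambda>r. r * deriv (deriv mt) r / deriv mt r) \<longlongrightarrow> \<beta>2) at_top)"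

definition Osg :: "(real \<Rightarrow> real) \<Rightarrow> bool" where
  "Osg m \<longleftrightarrow>
     (\<integral>\<^sup>+ r. indicator {2..} r * ennreal (1 / (r * ln r * m r)) \<partial>lborel) = \<infinity>"

definition Cm_space :: "(real \<Rightarrow> real) \<Rightarrow> (pt \<Rightarrow> pt) \<Rightarrow> bool" where
  "Cm_space m f \<longleftrightarrow> bounded (range f) \<and>
     bdd_above {norm (f x - f y) / (dist x y * (m (inverse (dist x y)) + 1)) | x y. x \<noteq> y}"

definition Cm_norm :: "(real \<Rightarrow> real) \<Rightarrow> (pt \<Rightarrow> pt) \<Rightarrow> real" where
  "Cm_norm m f = (SUP x. norm (f x)) +
     Sup {norm (f x - f y) / (dist x y * (m (inverse (dist x y)) + 1)) | x y. x \<noteq> y}"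

definition Ht :: "(real \<Rightarrow> real) \<Rightarrow> real \<Rightarrow> real" where
  "Ht m r = (LBINT \<rho>=inverse r..1. 1 / (\<rho> * (m (inverse \<rho>) + 1)))"

definition Ht_inv :: "(real \<Rightarrow> real) \<Rightarrow> real \<Rightarrow> real" where
  "Ht_inv m y = (THE r. r > 0 \<and> Ht m r = y)"

end

theory Submission
  imports Defs
begin


lemma m_basic:
  assumes "H1 n m"
  shows "\<And>r. r > 0 \<Longrightarrow> m r > 0"
    and "\<And>r. r > 0 \<Longrightarrow> (m has_real_derivative deriv m r) (at r)"
    and "\<And>r. r > 0 \<Longrightarrow> deriv m r \<ge> 0"
proof -
  fix r :: real assume r: "r > 0"
  from assms r show "m r > 0" "deriv m r \<ge> 0" unfolding H1_def by auto
  from assms have "Ck_on (n+4) {0<..} m" unfolding H1_def by auto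
  then have "\<forall>j<n+4. \<forall>r\<in>{0<..}. ((deriv ^^ j) m) differentiable (at r)" unfolding Ck_on_def by auto
  then have "((deriv ^^ 0) m) differentiable (at r)" using r by (erule_tac allE[of _ 0]) simp
  then have "m differentiable (at r)" by simp
  then show "(m has_real_derivative deriv m r) (at r)"
    using DERIV_deriv_iff_real_differentiable by blast
qed

lemma m_mono:
  assumes "H1 n m" "0 < p" "p \<le> q"
  shows "m p \<le> m q"
  using assms(3)
proof (rule DERIV_nonneg_imp_nondecreasing)
  fix x assume "p \<le> x" "x \<le> q"
  then have "x > 0" using assms by auto
  then show "\<exists>y. (m has_real_derivative y) (at x) \<and> 0 \<le> y"
    using m_basic[OF assms(1)] by blast
qed

lemma m_cont:
  assumes "H1 n m"
  shows "continuous_on {0<..} m"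
proof -
  have "\<forall>x\<in>{0<..}. isCont m x"
    using m_basic(2)[OF assms] DERIV_isCont by auto
  then show ?thesis using continuous_at_imp_continuous_on by blast
qed

definition om :: "(real \<Rightarrow> real) \<Rightarrow> real \<Rightarrow> real" where
  "om m r = r * (m (inverse r) + 1)"

definition FF :: "(real \<Rightarrow> real) \<Rightarrow> real \<Rightarrow> real" where
  "FF m r = (LBINT \<rho>=r..1. 1 / (\<rho> * (m (inverse \<rho>) + 1)))"

lemma Ht_FF: "Ht m R = FF m (inverse R)"
  unfolding Ht_def FF_def by simp

lemma om_pos: assumes "H1 n m" "r > 0" shows "om m r > 0"
  using m_basic(1)[OF assms(1), of "inverse r"] assms unfolding om_def
  by (simp add: add_pos_pos)

lemma om_cont: assumes "H1 n m" shows "continuous_on {0<..} (om m)"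
proof -
  have "continuous_on {0<..} (\<lambda>r. m (inverse r))"
    by (rule continuous_on_compose2[OF m_cont[OF assms]]) (auto intro!: continuous_intros)
  then show ?thesis unfolding om_def by (auto intro!: continuous_intros)
qed

lemma FF_deriv:
  assumes "H1 n m" "r > 0"
  shows "(FF m has_real_derivative -(1 / om m r)) (at r)"
proof -
  define f where "f = (\<lambda>\<rho>::real. 1 / (\<rho> * (m (inverse \<rho>) + 1)))"
  have fo: "f = (\<lambda>\<rho>. 1 / om m \<rho>)" unfolding f_def om_def by auto
  define a where "a = min r 1 / 2"
  define b where "b = max r 1 + 1"
  have ab: "0 < a" "a < r" "r < b" "a \<le> 1" "1 \<le> b" using assms(2) unfolding a_def b_def by auto
  have cf: "continuous_on {a..b} f"
    unfolding fo
  proof (rule continuous_on_divide)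
    show "continuous_on {a..b} (om m)"
      by (rule continuous_on_subset[OF om_cont[OF assms(1)]]) (use ab in auto)
    show "\<forall>x\<in>{a..b}. om m x \<noteq> 0"
    proof
      fix x assume "x \<in> {a..b}" then have "x > 0" using ab by auto
      then show "om m x \<noteq> 0" using om_pos[OF assms(1)] by (simp add: less_imp_neq[symmetric])
    qed
  qed (rule continuous_on_const)
  have "((\<lambda>u. LBINT y=1..u. f y) has_vector_derivative (f r)) (at r within {a..b})"
    using interval_integral_FTC2[of a 1 b f r] ab cf by (simp add: one_ereal_def)
  then have "((\<lambda>u. LBINT y=1..u. f y) has_real_derivative (f r)) (at r)"
    using ab by (simp add: has_real_derivative_iff_has_vector_derivative at_within_Icc_at)
  then have "((\<lambda>u. - (LBINT y=1..u. f y)) has_real_derivative - (f r)) (at r)"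
    by (rule DERIV_minus)
  moreover have "(\<lambda>u. - (LBINT y=1..u. f y)) = FF m"
    unfolding FF_def f_def by (rule ext, subst interval_integral_endpoints_reverse) simp
  ultimately show ?thesis unfolding fo by simp
qed


lemma FF_1: "FF m 1 = 0" unfolding FF_def by (simp add: one_ereal_def)

lemma FF_decr:
  assumes "H1 n m" "0 < p" "p < q"
  shows "FF m q < FF m p"
proof (rule DERIV_neg_imp_decreasing[OF assms(3)])
  fix x assume "p \<le> x" "x \<le> q"
  then have "x > 0" using assms by auto
  then show "\<exists>y. (FF m has_real_derivative y) (at x) \<and> y < 0"
    using FF_deriv[OF assms(1)] om_pos[OF assms(1)] by (intro exI[of _ "-(1 / om m x)"]) auto
qed

lemma FF_mono:
  assumes "H1 n m" "0 < p" "p \<le> q"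
  shows "FF m q \<le> FF m p"
  using FF_decr[OF assms(1,2)] assms(3) by (cases "p = q") (auto intro: less_imp_le)

lemma FF_log:
  assumes "H1 n m" "0 < p" "p \<le> q"
  shows "FF m q + ln q / (m (inverse p) + 1) \<le> FF m p + ln p / (m (inverse p) + 1)"
proof -
  define c where "c = m (inverse p) + 1"
  have c: "c > 0" unfolding c_def using m_basic(1)[OF assms(1), of "inverse p"] assms(2) by simp
  have "(\<lambda>r. FF m r + ln r / c) q \<le> (\<lambda>r. FF m r + ln r / c) p"
  proof (rule DERIV_nonpos_imp_nonincreasing[OF assms(3)])
    fix x assume x: "p \<le> x" "x \<le> q"
    then have x0: "x > 0" using assms by auto
    have d: "((\<lambda>r. FF m r + ln r / c) has_real_derivative (-(1 / om m x) + inverse x / c)) (at x)"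
      using x0 c by (auto intro!: derivative_eq_intros FF_deriv[OF assms(1)] simp: field_simps)
    have "m (inverse x) \<le> m (inverse p)"
      using m_mono[OF assms(1), of "inverse x" "inverse p"] x0 x assms(2)
      by (simp add: le_imp_inverse_le)
    then have "om m x \<le> x * c" unfolding om_def c_def using x0 by simp
    then have "1 / (x * c) \<le> 1 / om m x"
      using om_pos[OF assms(1) x0] by (intro divide_left_mono) auto
    then have "-(1 / om m x) + inverse x / c \<le> 0" using x0 c
      by (simp add: field_simps)
    then show "\<exists>y. ((\<lambda>r. FF m r + ln r / c) has_real_derivative y) (at x) \<and> y \<le> 0"
      using d by blast
  qed
  then show ?thesis unfolding c_def by simp
qed

lemma FF_lip:
  assumes "H1 n m" "0 < L" "0 < r1" "r1 \<le> r2" "\<And>r. r1 \<le> r \<Longrightarrow> r \<le> r2 \<Longrightarrow> L \<le> om m r"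
  shows "\<bar>FF m r2 - FF m r1\<bar> \<le> (r2 - r1) / L"
proof -
  have "(\<lambda>r. FF m r + r / L) r1 \<le> (\<lambda>r. FF m r + r / L) r2"
  proof (rule DERIV_nonneg_imp_nondecreasing[OF assms(4)])
    fix x assume x: "r1 \<le> x" "x \<le> r2"
    then have x0: "x > 0" using assms by auto
    have d: "((\<lambda>r. FF m r + r / L) has_real_derivative (-(1 / om m x) + 1 / L)) (at x)"
      using x0 assms(2) by (auto intro!: derivative_eq_intros FF_deriv[OF assms(1)])
    have "1 / om m x \<le> 1 / L" using assms(5)[OF x] assms(2) by (intro divide_left_mono) auto
    then show "\<exists>y. ((\<lambda>r. FF m r + r / L) has_real_derivative y) (at x) \<and> 0 \<le> y"
      using d by (intro exI[of _ "-(1 / om m x) + 1 / L"]) auto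
  qed
  moreover have "FF m r2 \<le> FF m r1" using FF_mono[OF assms(1,3,4)] .
  ultimately show ?thesis by (simp add: diff_divide_distrib)
qed

lemma FF_cont: assumes "H1 n m" "r > 0" shows "isCont (FF m) r"
  using FF_deriv[OF assms] DERIV_isCont by blast

lemma Ht_strict:
  assumes "H1 n m" "0 < p" "p < q"
  shows "Ht m p < Ht m q"
  unfolding Ht_FF using FF_decr[OF assms(1), of "inverse q" "inverse p"] assms
  by (simp add: less_imp_inverse_less)

lemma Ht_inv_eq:
  assumes "H1 n m" "R0 > 0" "Ht m R0 = Y"
  shows "Ht_inv m Y = R0"
  unfolding Ht_inv_def
proof (rule the_equality)
  show "0 < R0 \<and> Ht m R0 = Y" using assms by auto
  fix r assume r: "0 < r \<and> Ht m r = Y"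
  show "r = R0"
  proof (rule ccontr)
    assume "r \<noteq> R0"
    then have "r < R0 \<or> R0 < r" by auto
    then show False using Ht_strict[OF assms(1)] r assms by (metis less_irrefl)
  qed
qed

lemma Ht_exists:
  assumes "H1 n m" "R2 > 0" "Y \<le> Ht m R2"
  shows "\<exists>R0>0. Ht m R0 = Y"
proof -
  define c where "c = m (inverse 1) + 1"
  define \<rho> where "\<rho> = exp (c * \<bar>Y\<bar>)"
  have c: "c > 0" unfolding c_def using m_basic(1)[OF assms(1), of 1] by simp
  have \<rho>1: "\<rho> \<ge> 1" unfolding \<rho>_def using c by simp
  have "FF m \<rho> + ln \<rho> / c \<le> FF m 1 + ln 1 / c"
    using FF_log[OF assms(1), of 1 \<rho>] \<rho>1 unfolding c_def by simp
  then have "FF m \<rho> \<le> - \<bar>Y\<bar>" using c unfolding \<rho>_def by (simp add: FF_1)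
  then have h1: "Ht m (inverse \<rho>) \<le> Y" unfolding Ht_FF by simp
  define R1 where "R1 = min (inverse \<rho>) R2"
  have R1: "R1 > 0" "R1 \<le> R2" unfolding R1_def using \<rho>1 assms(2) by auto
  have "Ht m R1 \<le> Y"
  proof (cases "inverse \<rho> \<le> R2")
    case True then show ?thesis using h1 unfolding R1_def by simp
  next
    case False then have "R1 = R2" unfolding R1_def by simp
    then show ?thesis using Ht_strict[OF assms(1), of R2 "inverse \<rho>"] False assms h1 by simp
  qed
  moreover have "continuous_on {R1..R2} (Ht m)"
  proof (rule continuous_at_imp_continuous_on, rule ballI)
    fix x assume "x \<in> {R1..R2}" then have x: "x > 0" using R1 by auto
    have "isCont (\<lambda>R. FF m (inverse R)) x"
      by (rule continuous_at_compose[unfolded o_def, OF _ FF_cont[OF assms(1)]])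
         (use x in \<open>auto intro!: continuous_intros\<close>)
    then show "isCont (Ht m) x" unfolding Ht_FF[abs_def] by simp
  qed
  ultimately obtain R0 where "R1 \<le> R0" "R0 \<le> R2" "Ht m R0 = Y"
    using IVT'[of "Ht m" R1 Y R2] assms(3) R1 by auto
  then show ?thesis using R1 by (intro exI[of _ R0]) auto
qed



lemma abstract_fwd:
  fixes d W :: "real \<Rightarrow> real"
  assumes H: "H1 n m"
    and ab: "a \<le> b"
    and contd: "continuous_on {a..b} d"
    and monoW: "\<And>x y. a \<le> x \<Longrightarrow> x \<le> y \<Longrightarrow> y \<le> b \<Longrightarrow> W x \<le> W y"
    and dnn: "\<And>\<tau>. a \<le> \<tau> \<Longrightarrow> \<tau> \<le> b \<Longrightarrow> d \<tau> \<ge> 0"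
    and da: "d a > 0"
    and step: "\<And>\<tau>1 \<tau>2 M. a \<le> \<tau>1 \<Longrightarrow> \<tau>1 \<le> \<tau>2 \<Longrightarrow> \<tau>2 \<le> b \<Longrightarrow>
       (\<And>\<sigma>. \<tau>1 \<le> \<sigma> \<Longrightarrow> \<sigma> \<le> \<tau>2 \<Longrightarrow> d \<sigma> > 0 \<and> om m (d \<sigma>) \<le> M) \<Longrightarrow>
       \<bar>d \<tau>2 - d \<tau>1\<bar> \<le> M * (W \<tau>2 - W \<tau>1)"
    and blow: "\<And>B. \<exists>\<delta>>0. \<forall>r. 0 < r \<longrightarrow> r < \<delta> \<longrightarrow> FF m r > B"
  shows "\<And>\<tau>. a \<le> \<tau> \<Longrightarrow> \<tau> \<le> b \<Longrightarrow> d \<tau> > 0 \<and> \<bar>FF m (d \<tau>) - FF m (d a)\<bar> \<le> W \<tau> - W a"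
proof -
  have dcont: "\<exists>\<eta>>0. \<forall>\<sigma>. a \<le> \<sigma> \<longrightarrow> \<sigma> \<le> b \<longrightarrow> \<bar>\<sigma> - c\<bar> < \<eta> \<longrightarrow> \<bar>d \<sigma> - d c\<bar> < e"
    if "a \<le> c" "c \<le> b" "e > 0" for c e
  proof -
    from contd that obtain \<eta> where "\<eta> > 0" "\<forall>x'\<in>{a..b}. dist x' c < \<eta> \<longrightarrow> dist (d x') (d c) < e"
      unfolding continuous_on_iff by (meson atLeastAtMost_iff)
    then show ?thesis by (auto simp: dist_real_def)
  qed
  have loc: "\<exists>\<eta>>0. (\<forall>\<sigma>. a \<le> \<sigma> \<longrightarrow> \<sigma> \<le> b \<longrightarrow> \<bar>\<sigma> - c\<bar> < \<eta> \<longrightarrow> d \<sigma> > 0) \<and>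
      (\<forall>\<sigma>1 \<sigma>2. a \<le> \<sigma>1 \<longrightarrow> \<sigma>1 \<le> \<sigma>2 \<longrightarrow> \<sigma>2 \<le> b \<longrightarrow> \<bar>\<sigma>1 - c\<bar> < \<eta> \<longrightarrow> \<bar>\<sigma>2 - c\<bar> < \<eta> \<longrightarrow>
         \<bar>FF m (d \<sigma>2) - FF m (d \<sigma>1)\<bar> \<le> (1 + \<epsilon>) * (W \<sigma>2 - W \<sigma>1))"
    if c: "a \<le> c" "c \<le> b" "d c > 0" and \<epsilon>: "\<epsilon> > 0" for c \<epsilon>
  proof -
    define \<kappa> where "\<kappa> = \<epsilon> / (2 + \<epsilon>)"
    have \<kappa>: "0 < \<kappa>" "\<kappa> < 1" unfolding \<kappa>_def using \<epsilon> by auto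
    have kk: "(1 + \<kappa>) / (1 - \<kappa>) = 1 + \<epsilon>" unfolding \<kappa>_def using \<epsilon> by (simp add: field_simps)
    define o0 where "o0 = om m (d c)"
    have o0: "o0 > 0" unfolding o0_def using om_pos[OF H c(3)] .
    have "isCont (om m) (d c)"
      using om_cont[OF H] c(3) continuous_on_eq_continuous_at[of "{0<..}" "om m"] by auto
    then obtain \<rho>0 where \<rho>0: "\<rho>0 > 0" "\<forall>r. dist r (d c) < \<rho>0 \<longrightarrow> dist (om m r) (om m (d c)) < \<kappa> * o0"
      unfolding continuous_at_eps_delta using \<kappa> o0 by (meson mult_pos_pos)
    define \<rho> where "\<rho> = min \<rho>0 (d c / 2)"
    have \<rho>: "\<rho> > 0" using \<rho>0 c(3) unfolding \<rho>_def by auto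
    have near: "r > 0 \<and> (1 - \<kappa>) * o0 \<le> om m r \<and> om m r \<le> (1 + \<kappa>) * o0" if "\<bar>r - d c\<bar> < \<rho>" for r
    proof -
      have "dist (om m r) o0 < \<kappa> * o0" using \<rho>0(2) that unfolding \<rho>_def o0_def by (auto simp: dist_real_def)
      moreover have "\<bar>r - d c\<bar> < d c / 2" using that unfolding \<rho>_def by auto
      then have "r > 0" by linarith
      ultimately show ?thesis by (auto simp: dist_real_def algebra_simps)
    qed
    obtain \<eta> where \<eta>: "\<eta> > 0" "\<forall>\<sigma>. a \<le> \<sigma> \<longrightarrow> \<sigma> \<le> b \<longrightarrow> \<bar>\<sigma> - c\<bar> < \<eta> \<longrightarrow> \<bar>d \<sigma> - d c\<bar> < \<rho>"
      using dcont[OF c(1,2) \<rho>] by blast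
    show ?thesis
    proof (intro exI[of _ \<eta>] conjI allI impI)
      show "\<eta> > 0" by fact
      fix \<sigma> assume "a \<le> \<sigma>" "\<sigma> \<le> b" "\<bar>\<sigma> - c\<bar> < \<eta>"
      then show "d \<sigma> > 0" using \<eta>(2) near by blast
    next
      fix \<sigma>1 \<sigma>2 assume s: "a \<le> \<sigma>1" "\<sigma>1 \<le> \<sigma>2" "\<sigma>2 \<le> b" "\<bar>\<sigma>1 - c\<bar> < \<eta>" "\<bar>\<sigma>2 - c\<bar> < \<eta>"
      have inside: "\<bar>d \<sigma> - d c\<bar> < \<rho>" if "\<sigma>1 \<le> \<sigma>" "\<sigma> \<le> \<sigma>2" for \<sigma>
        using \<eta>(2) s that by auto
      have st: "\<bar>d \<sigma>2 - d \<sigma>1\<bar> \<le> ((1 + \<kappa>) * o0) * (W \<sigma>2 - W \<sigma>1)"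
        by (rule step[OF s(1,2,3)]) (use inside near in blast)
      define r1 where "r1 = min (d \<sigma>1) (d \<sigma>2)"
      define r2 where "r2 = max (d \<sigma>1) (d \<sigma>2)"
      have i1: "\<bar>d \<sigma>1 - d c\<bar> < \<rho>" "\<bar>d \<sigma>2 - d c\<bar> < \<rho>" using inside s by auto
      have r12: "r1 \<le> r2" "r1 > 0" unfolding r1_def r2_def using i1 near by auto
      have "\<bar>FF m r2 - FF m r1\<bar> \<le> (r2 - r1) / ((1 - \<kappa>) * o0)"
      proof (rule FF_lip[OF H _ r12(2) r12(1)])
        show "0 < (1 - \<kappa>) * o0" using \<kappa> o0 by auto
        fix r assume "r1 \<le> r" "r \<le> r2"
        then have "\<bar>r - d c\<bar> < \<rho>" using i1 unfolding r1_def r2_def by auto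
        then show "(1 - \<kappa>) * o0 \<le> om m r" using near by blast
      qed
      moreover have "\<bar>FF m (d \<sigma>2) - FF m (d \<sigma>1)\<bar> = \<bar>FF m r2 - FF m r1\<bar>"
        unfolding r1_def r2_def by (cases "d \<sigma>1 \<le> d \<sigma>2") (auto simp: min_def max_def abs_minus_commute)
      moreover have "r2 - r1 = \<bar>d \<sigma>2 - d \<sigma>1\<bar>" unfolding r1_def r2_def by auto
      ultimately have "\<bar>FF m (d \<sigma>2) - FF m (d \<sigma>1)\<bar> \<le> \<bar>d \<sigma>2 - d \<sigma>1\<bar> / ((1 - \<kappa>) * o0)" by simp
      also have "\<dots> \<le> ((1 + \<kappa>) * o0) * (W \<sigma>2 - W \<sigma>1) / ((1 - \<kappa>) * o0)"
        using st \<kappa> o0 by (intro divide_right_mono) auto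
      also have "\<dots> = (1 + \<kappa>) / (1 - \<kappa>) * (W \<sigma>2 - W \<sigma>1)" using o0 by simp
      finally show "\<bar>FF m (d \<sigma>2) - FF m (d \<sigma>1)\<bar> \<le> (1 + \<epsilon>) * (W \<sigma>2 - W \<sigma>1)" using kk by simp
    qed
  qed
  have main: "\<forall>\<tau>. a \<le> \<tau> \<longrightarrow> \<tau> \<le> b \<longrightarrow> d \<tau> > 0 \<and> \<bar>FF m (d \<tau>) - FF m (d a)\<bar> \<le> (1 + \<epsilon>) * (W \<tau> - W a)"
    if \<epsilon>: "\<epsilon> > 0" for \<epsilon>
  proof -
    define P where "P = (\<lambda>\<sigma>. d \<sigma> > 0 \<and> \<bar>FF m (d \<sigma>) - FF m (d a)\<bar> \<le> (1 + \<epsilon>) * (W \<sigma> - W a))"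
    define S where "S = {\<tau>. a \<le> \<tau> \<and> \<tau> \<le> b \<and> (\<forall>\<sigma>. a \<le> \<sigma> \<longrightarrow> \<sigma> \<le> \<tau> \<longrightarrow> P \<sigma>)}"
    have Pa: "P a" unfolding P_def using da by simp
    have aS: "a \<in> S" unfolding S_def using ab Pa by auto
    have bdd: "bdd_above S" unfolding S_def by (auto intro: bdd_aboveI[of _ b])
    define c where "c = Sup S"
    have c1: "a \<le> c" unfolding c_def using cSup_upper[OF aS bdd] .
    have c2: "c \<le> b" unfolding c_def by (rule cSup_least) (use aS in \<open>auto simp: S_def\<close>)
    note c = c1 c2
    have below: "P \<sigma>" if "a \<le> \<sigma>" "\<sigma> < c" for \<sigma>
    proof -
      from that obtain x where "x \<in> S" "\<sigma> < x" unfolding c_def using less_cSup_iff[of S \<sigma>] aS bdd by auto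
      then show ?thesis unfolding S_def using that by auto
    qed
    have dc: "d c > 0"
    proof (cases "c = a")
      case True then show ?thesis using da by simp
    next
      case False
      then have ca: "a < c" using c by auto
      show ?thesis
      proof (rule ccontr)
        assume "\<not> d c > 0"
        then have dc0: "d c = 0" using dnn[OF c] by auto
        define B where "B = FF m (d a) + (1 + \<epsilon>) * (W b - W a)"
        obtain \<delta> where \<delta>: "\<delta> > 0" "\<forall>r. 0 < r \<longrightarrow> r < \<delta> \<longrightarrow> FF m r > B" using blow by blast
        obtain \<eta> where \<eta>: "\<eta> > 0" "\<forall>\<sigma>. a \<le> \<sigma> \<longrightarrow> \<sigma> \<le> b \<longrightarrow> \<bar>\<sigma> - c\<bar> < \<eta> \<longrightarrow> \<bar>d \<sigma> - d c\<bar> < \<delta>"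
          using dcont[OF c \<delta>(1)] by blast
        define \<sigma> where "\<sigma> = max (c - \<eta>/2) ((a + c) / 2)"
        have \<sigma>: "a \<le> \<sigma>" "\<sigma> < c" "\<sigma> \<le> b" "\<bar>\<sigma> - c\<bar> < \<eta>" unfolding \<sigma>_def using ca c \<eta>(1) by (auto simp: max_def abs_if field_simps)
        have "d \<sigma> < \<delta>" using \<eta>(2) \<sigma> dc0 by auto
        moreover have P\<sigma>: "P \<sigma>" using below \<sigma> by auto
        ultimately have "FF m (d \<sigma>) > B" using \<delta>(2) unfolding P_def by auto
        moreover have "W \<sigma> \<le> W b" using monoW \<sigma> by auto
        moreover have "(1 + \<epsilon>) * (W \<sigma> - W a) \<le> (1 + \<epsilon>) * (W b - W a)"
          using \<open>W \<sigma> \<le> W b\<close> \<epsilon> by (intro mult_left_mono) auto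
        moreover have "FF m (d \<sigma>) - FF m (d a) \<le> (1 + \<epsilon>) * (W \<sigma> - W a)"
          using P\<sigma> unfolding P_def by (simp add: abs_le_iff)
        ultimately show False unfolding B_def by linarith
      qed
    qed
    obtain \<eta> where \<eta>: "\<eta> > 0" "\<forall>\<sigma>. a \<le> \<sigma> \<longrightarrow> \<sigma> \<le> b \<longrightarrow> \<bar>\<sigma> - c\<bar> < \<eta> \<longrightarrow> d \<sigma> > 0"
      "\<forall>\<sigma>1 \<sigma>2. a \<le> \<sigma>1 \<longrightarrow> \<sigma>1 \<le> \<sigma>2 \<longrightarrow> \<sigma>2 \<le> b \<longrightarrow> \<bar>\<sigma>1 - c\<bar> < \<eta> \<longrightarrow> \<bar>\<sigma>2 - c\<bar> < \<eta> \<longrightarrow>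
         \<bar>FF m (d \<sigma>2) - FF m (d \<sigma>1)\<bar> \<le> (1 + \<epsilon>) * (W \<sigma>2 - W \<sigma>1)"
      using loc[OF c dc \<epsilon>] by blast
    define \<sigma>0 where "\<sigma>0 = max a (c - \<eta>/2)"
    have s0: "a \<le> \<sigma>0" "\<sigma>0 \<le> c" "\<bar>\<sigma>0 - c\<bar> < \<eta>" unfolding \<sigma>0_def using c \<eta>(1) by auto
    have P0: "P \<sigma>0"
    proof (cases "\<sigma>0 < c")
      case True then show ?thesis using below s0 by auto
    next
      case False then have "\<sigma>0 = a" unfolding \<sigma>0_def using \<eta>(1) by (auto simp: max_def split: if_splits)
      then show ?thesis using Pa by simp
    qed
    define c' where "c' = min b (c + \<eta>/2)"
    have "c' \<in> S" unfolding S_def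
    proof (intro CollectI conjI allI impI)
      show "a \<le> c'" "c' \<le> b" unfolding c'_def using c \<eta>(1) by auto
      fix \<sigma> assume \<sigma>: "a \<le> \<sigma>" "\<sigma> \<le> c'"
      show "P \<sigma>"
      proof (cases "\<sigma> < c")
        case True then show ?thesis using below \<sigma> by auto
      next
        case False
        then have \<sigma>': "c \<le> \<sigma>" "\<sigma> \<le> b" "\<bar>\<sigma> - c\<bar> < \<eta>" using \<sigma> \<eta>(1) unfolding c'_def by auto
        have "\<bar>FF m (d \<sigma>) - FF m (d \<sigma>0)\<bar> \<le> (1 + \<epsilon>) * (W \<sigma> - W \<sigma>0)"
          using \<eta>(3) s0 \<sigma>' by auto
        moreover have "d \<sigma> > 0" using \<eta>(2) \<sigma> \<sigma>' by auto
        ultimately show ?thesis using P0 unfolding P_def by (auto simp: algebra_simps)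
      qed
    qed
    then have "c' \<le> c" unfolding c_def using bdd by (rule cSup_upper)
    then have cb: "c = b" unfolding c'_def using c \<eta>(1) by auto
    then have "c' = b" unfolding c'_def using \<eta>(1) by auto
    with \<open>c' \<in> S\<close> have "b \<in> S" by simp
    then show ?thesis unfolding S_def P_def by auto
  qed
  fix \<tau> assume \<tau>: "a \<le> \<tau>" "\<tau> \<le> b"
  have pos: "d \<tau> > 0" using main[of 1] \<tau> by auto
  have Z: "W \<tau> - W a \<ge> 0" using monoW[of a \<tau>] \<tau> by auto
  have "\<bar>FF m (d \<tau>) - FF m (d a)\<bar> \<le> W \<tau> - W a"
  proof (rule field_le_epsilon)
    fix e :: real assume e: "e > 0"
    define \<epsilon> where "\<epsilon> = e / (W \<tau> - W a + 1)"
    have \<epsilon>: "\<epsilon> > 0" unfolding \<epsilon>_def using e Z by auto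
    have "\<epsilon> * (W \<tau> - W a) \<le> e" unfolding \<epsilon>_def using e Z by (simp add: field_simps)
    show "\<bar>FF m (d \<tau>) - FF m (d a)\<bar> \<le> W \<tau> - W a + e"
    proof -
      have "\<bar>FF m (d \<tau>) - FF m (d a)\<bar> \<le> (1 + \<epsilon>) * (W \<tau> - W a)" using main[OF \<epsilon>] \<tau> by auto
      moreover have "(1 + \<epsilon>) * (W \<tau> - W a) = (W \<tau> - W a) + \<epsilon> * (W \<tau> - W a)" by (simp add: algebra_simps)
      ultimately show ?thesis using \<open>\<epsilon> * (W \<tau> - W a) \<le> e\<close> by linarith
    qed
  qed
  then show "d \<tau> > 0 \<and> \<bar>FF m (d \<tau>) - FF m (d a)\<bar> \<le> W \<tau> - W a" using pos by simp
qed


lemma abstract_bwd: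
  fixes d W :: "real \<Rightarrow> real"
  assumes H: "H1 n m"
    and ab: "a \<le> b"
    and contd: "continuous_on {a..b} d"
    and monoW: "\<And>x y. a \<le> x \<Longrightarrow> x \<le> y \<Longrightarrow> y \<le> b \<Longrightarrow> W x \<le> W y"
    and dnn: "\<And>\<tau>. a \<le> \<tau> \<Longrightarrow> \<tau> \<le> b \<Longrightarrow> d \<tau> \<ge> 0"
    and db: "d b > 0"
    and step: "\<And>\<tau>1 \<tau>2 M. a \<le> \<tau>1 \<Longrightarrow> \<tau>1 \<le> \<tau>2 \<Longrightarrow> \<tau>2 \<le> b \<Longrightarrow>
       (\<And>\<sigma>. \<tau>1 \<le> \<sigma> \<Longrightarrow> \<sigma> \<le> \<tau>2 \<Longrightarrow> d \<sigma> > 0 \<and> om m (d \<sigma>) \<le> M) \<Longrightarrow>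
       \<bar>d \<tau>2 - d \<tau>1\<bar> \<le> M * (W \<tau>2 - W \<tau>1)"
    and blow: "\<And>B. \<exists>\<delta>>0. \<forall>r. 0 < r \<longrightarrow> r < \<delta> \<longrightarrow> FF m r > B"
  shows "\<And>\<tau>. a \<le> \<tau> \<Longrightarrow> \<tau> \<le> b \<Longrightarrow> d \<tau> > 0 \<and> \<bar>FF m (d \<tau>) - FF m (d b)\<bar> \<le> W b - W \<tau>"
proof -
  fix \<tau> assume \<tau>: "a \<le> \<tau>" "\<tau> \<le> b"
  have R: "d (- (- \<tau>)) > 0 \<and> \<bar>FF m (d (- (- \<tau>))) - FF m (d (- (- b)))\<bar> \<le> (- W (- (- \<tau>))) - (- W (- (- b)))"
  proof (rule abstract_fwd[OF H, of "-b" "-a" "\<lambda>x. d (- x)" "\<lambda>x. - W (- x)"])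
    show "- b \<le> - a" using ab by simp
    show "continuous_on {- b..- a} (\<lambda>x. d (- x))"
      by (rule continuous_on_compose2[OF contd]) (auto intro!: continuous_intros)
    show "\<And>x y. - b \<le> x \<Longrightarrow> x \<le> y \<Longrightarrow> y \<le> - a \<Longrightarrow> - W (- x) \<le> - W (- y)"
      using monoW by simp
    show "\<And>\<tau>. - b \<le> \<tau> \<Longrightarrow> \<tau> \<le> - a \<Longrightarrow> 0 \<le> d (- \<tau>)" using dnn by simp
    show "0 < d (- (- b))" using db by simp
    show "\<And>B. \<exists>\<delta>>0. \<forall>r. 0 < r \<longrightarrow> r < \<delta> \<longrightarrow> B < FF m r" using blow by blast
    show "- b \<le> - \<tau>" "- \<tau> \<le> - a" using \<tau> by auto
    fix \<tau>1 \<tau>2 M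
    assume t: "- b \<le> \<tau>1" "\<tau>1 \<le> \<tau>2" "\<tau>2 \<le> - a"
      and h: "\<And>\<sigma>. \<tau>1 \<le> \<sigma> \<Longrightarrow> \<sigma> \<le> \<tau>2 \<Longrightarrow> 0 < d (- \<sigma>) \<and> om m (d (- \<sigma>)) \<le> M"
    have "\<bar>d (- \<tau>1) - d (- \<tau>2)\<bar> \<le> M * (W (- \<tau>1) - W (- \<tau>2))"
    proof (rule step)
      show "a \<le> - \<tau>2" "- \<tau>2 \<le> - \<tau>1" "- \<tau>1 \<le> b" using t by auto
      fix \<sigma> assume "- \<tau>2 \<le> \<sigma>" "\<sigma> \<le> - \<tau>1"
      then show "0 < d \<sigma> \<and> om m (d \<sigma>) \<le> M" using h[of "-\<sigma>"] by auto
    qed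
    then show "\<bar>d (- \<tau>2) - d (- \<tau>1)\<bar> \<le> M * (- W (- \<tau>2) - - W (- \<tau>1))"
      by (simp add: abs_minus_commute)
  qed
  then show "d \<tau> > 0 \<and> \<bar>FF m (d \<tau>) - FF m (d b)\<bar> \<le> W b - W \<tau>" by simp
qed



lemma H_deriv:
  assumes H: "H1 n m" and R: "R > 0"
  shows "((\<lambda>R. FF m (inverse R)) has_real_derivative 1 / (R * (m R + 1))) (at R)"
proof -
  have "((\<lambda>R. FF m (inverse R)) has_real_derivative (-(1 / om m (inverse R))) * (- (inverse R ^ Suc (Suc 0)))) (at R)"
    by (rule DERIV_chain2[OF FF_deriv[OF H] DERIV_inverse]) (use R in auto)
  moreover have "(-(1 / om m (inverse R))) * (- (inverse R ^ Suc (Suc 0))) = 1 / (R * (m R + 1))"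
    using R unfolding om_def by (simp add: field_simps power2_eq_square)
  ultimately show ?thesis by simp
qed

lemma FF_blow:
  assumes H: "H1 n m" and osg: "Osg m"
  shows "\<exists>\<delta>>0. \<forall>r. 0 < r \<longrightarrow> r < \<delta> \<longrightarrow> FF m r > B"
proof (rule ccontr)
  assume nb: "\<not> ?thesis"
  have bnd: "FF m r \<le> B" if "r > 0" for r
  proof (rule ccontr)
    assume "\<not> FF m r \<le> B"
    then have "\<forall>r'. 0 < r' \<longrightarrow> r' < r \<longrightarrow> FF m r' > B"
      using FF_mono[OF H] by (meson le_less_trans less_imp_le not_le)
    then show False using nb that by blast
  qed
  define h where "h = (\<lambda>x::real. 1 / (x * (m x + 1)))"
  define g where "g = (\<lambda>x::real. 1 / (x * ln x * m x))"
  define C where "C = (m 2 + 1) / (ln 2 * m 2)"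
  have m2: "m 2 > 0" using m_basic(1)[OF H, of 2] by simp
  have C: "C > 0" unfolding C_def using m2 by simp
  have hpos: "h x > 0" if "x > 0" for x
    unfolding h_def using that m_basic(1)[OF H, of x] by simp
  have gle: "g x \<le> C * h x" if x: "x \<ge> 2" for x
  proof -
    have mx: "m x \<ge> m 2" using m_mono[OF H, of 2 x] x by simp
    have lx: "ln x \<ge> ln 2" using x by simp
    have l2: "ln (2::real) > 0" by simp
    have "m x + 1 \<le> m x + m x / m 2" using mx m2 by (simp add: field_simps)
    also have "\<dots> = (m 2 + 1) / m 2 * m x" using m2 by (simp add: field_simps)
    also have "\<dots> = C * ln 2 * m x"
    proof -
      have "C * ln 2 = (m 2 + 1) / m 2" unfolding C_def using l2 by simp
      then show ?thesis by simp
    qed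
    also have "\<dots> \<le> C * ln x * m x" using C lx m2 mx by (intro mult_right_mono mult_left_mono) auto
    finally have *: "m x + 1 \<le> C * ln x * m x" .
    have pos: "x * (m x + 1) > 0" using x m2 mx by (intro mult_pos_pos) auto
    have "g x = 1 / (x * ln x * m x)" unfolding g_def ..
    also have "\<dots> \<le> 1 / (x * (m x + 1) / C)"
    proof (rule divide_left_mono)
      have "x * (m x + 1) \<le> x * (C * ln x * m x)" using mult_left_mono[OF *, of x] x by simp
      then show "x * (m x + 1) / C \<le> x * ln x * m x" using C by (simp add: pos_divide_le_eq mult.commute mult.left_commute)
      show "0 < x * ln x * m x * (x * (m x + 1) / C)" using pos C x m2 mx l2 lx
        by (intro mult_pos_pos) auto
    qed simp
    also have "\<dots> = C * h x" unfolding h_def by simp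
    finally show ?thesis .
  qed
  have hcont: "continuous_on {2..R} h" for R
  proof -
    have mc: "continuous_on {2..R} m" by (rule continuous_on_subset[OF m_cont[OF H]]) auto
    have nz: "\<forall>x\<in>{2..R}. x * (m x + 1) \<noteq> 0"
    proof
      fix x :: real assume "x \<in> {2..R}"
      then have x: "x > 0" by auto
      then have "m x > 0" using m_basic(1)[OF H] by blast
      then have "x * (m x + 1) > 0" using x by simp
      then show "x * (m x + 1) \<noteq> 0" by linarith
    qed
    have "continuous_on {2..R} (\<lambda>x. x * (m x + 1))"
      using mc by (intro continuous_on_mult continuous_on_add continuous_on_id continuous_on_const)
    then show ?thesis unfolding h_def using nz
      by (intro continuous_on_divide continuous_on_const)
  qed
  have hint: "(h has_integral (FF m (inverse R) - FF m (inverse 2))) {2..R}" if "R \<ge> 2" for R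
  proof (rule fundamental_theorem_of_calculus[OF that])
    fix x :: real assume "x \<in> {2..R}"
    then have "x > 0" by auto
    then show "((\<lambda>R. FF m (inverse R)) has_vector_derivative h x) (at x within {2..R})"
      using H_deriv[OF H] unfolding h_def
      by (auto simp: has_real_derivative_iff_has_vector_derivative[symmetric] intro: has_field_derivative_at_within)
  qed
  define K where "K = C * (B - FF m (inverse 2))"
  define \<phi> where "\<phi> = (\<lambda>k::nat. \<lambda>x. ennreal (indicator {2..2 + real k} x * (C * h x)))"
  have \<phi>int: "integral\<^sup>N lborel (\<phi> k) \<le> ennreal K" for k
  proof -
    have "((\<lambda>x. C * h x) has_integral (C * (FF m (inverse (2 + real k)) - FF m (inverse 2)))) {2..2 + real k}"
      using has_integral_mult_right[OF hint[of "2 + real k"]] by simp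
    note hi = this
    have "integral\<^sup>N lborel (\<lambda>x. ennreal (C * h x) * indicator {2..2 + real k} x)
        = ennreal (C * (FF m (inverse (2 + real k)) - FF m (inverse 2)))"
    proof (rule nn_integral_has_integral_lebesgue'[OF _ hi])
      fix x :: real assume "x \<in> {2..2 + real k}"
      then have "h x > 0" using hpos by auto
      then show "0 \<le> C * h x" using C by simp
    qed
    moreover have "(\<lambda>x. ennreal (C * h x) * indicator {2..2 + real k} x) = \<phi> k"
      unfolding \<phi>_def by (auto split: split_indicator)
    moreover have "C * (FF m (inverse (2 + real k)) - FF m (inverse 2)) \<le> K"
      unfolding K_def using bnd[of "inverse (2 + real k)"] C by (auto intro!: mult_left_mono)
    ultimately show ?thesis by (auto intro: ennreal_leI)
  qed
  have \<phi>meas: "\<phi> k \<in> borel_measurable lborel" for k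
  proof -
    have "(\<lambda>x. indicator {2..2 + real k} x *\<^sub>R (C * h x)) \<in> borel_measurable borel"
      by (rule borel_measurable_continuous_on_indicator) (auto intro!: continuous_intros hcont)
    then show ?thesis unfolding \<phi>_def by simp
  qed
  have \<phi>inc: "incseq \<phi>"
  proof (rule incseq_SucI, rule le_funI)
    fix k x
    show "\<phi> k x \<le> \<phi> (Suc k) x"
      unfolding \<phi>_def using hpos[of x] C
      by (auto intro!: ennreal_leI split: split_indicator)
  qed
  have "(\<integral>\<^sup>+ r. indicator {2..} r * ennreal (1 / (r * ln r * m r)) \<partial>lborel) \<le> (\<integral>\<^sup>+ x. (SUP k. \<phi> k x) \<partial>lborel)"
  proof (rule nn_integral_mono)
    fix x :: real
    show "indicator {2..} x * ennreal (1 / (x * ln x * m x)) \<le> (SUP k. \<phi> k x)"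
    proof (cases "x \<ge> 2")
      case True
      obtain k :: nat where k: "x - 2 \<le> real k" using real_arch_simple by blast
      have "indicator {2..} x * ennreal (1 / (x * ln x * m x)) = ennreal (g x)"
        using True unfolding g_def by simp
      also have "\<dots> \<le> \<phi> k x" unfolding \<phi>_def using gle[OF True] True k by (auto intro!: ennreal_leI)
      also have "\<dots> \<le> (SUP k. \<phi> k x)" by (rule SUP_upper) simp
      finally show ?thesis .
    qed simp
  qed
  also have "\<dots> = (SUP k. integral\<^sup>N lborel (\<phi> k))"
    by (rule nn_integral_monotone_convergence_SUP[OF \<phi>inc \<phi>meas])
  also have "\<dots> \<le> ennreal K" using \<phi>int by (rule SUP_least)
  finally show False using osg unfolding Osg_def by (simp add: top_unique)
qed



lemma lbint_hk:
  fixes f :: "real \<Rightarrow> 'a::euclidean_space"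
  assumes "interval_lebesgue_integrable lborel (ereal p) (ereal q) f"
  shows "(LBINT x=p..q. f x) = (if p \<le> q then integral {p..q} f else - integral {q..p} f)"
    and "f integrable_on {min p q..max p q}"
proof -
  have "(LBINT x=p..q. f x) = (if p \<le> q then integral {p..q} f else - integral {q..p} f) \<and>
        f integrable_on {min p q..max p q}"
  proof (cases "p \<le> q")
    case True
    then have si: "set_integrable lborel {p<..<q} f" using assms
      unfolding interval_lebesgue_integrable_def by simp
    have "(LBINT x=p..q. f x) = (LINT x : {p<..<q} | lborel. f x)"
      using interval_lebesgue_integral_le_eq[of "ereal p" "ereal q"] True by simp
    also have "\<dots> = integral {p<..<q} f" using set_borel_integral_eq_integral(2)[OF si] .
    also have "\<dots> = integral {p..q} f" by (simp add: integral_open_interval_real)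
    finally show ?thesis using True set_borel_integral_eq_integral(1)[OF si]
      by (simp add: integrable_on_open_interval_real)
  next
    case False
    then have si: "set_integrable lborel {q<..<p} f" using assms
      unfolding interval_lebesgue_integrable_def by simp
    have "(LBINT x=p..q. f x) = - (LINT x : {q<..<p} | lborel. f x)"
      using interval_lebesgue_integral_gt_eq[of "ereal q" "ereal p"] False by simp
    also have "\<dots> = - integral {q<..<p} f" using set_borel_integral_eq_integral(2)[OF si] by simp
    also have "\<dots> = - integral {q..p} f" by (simp add: integral_open_interval_real)
    finally show ?thesis using False set_borel_integral_eq_integral(1)[OF si]
      by (simp add: integrable_on_open_interval_real)
  qed
  then show "(LBINT x=p..q. f x) = (if p \<le> q then integral {p..q} f else - integral {q..p} f)"
    and "f integrable_on {min p q..max p q}" by auto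
qed

lemma diff_formula:
  fixes X g :: "real \<Rightarrow> 'a::banach"
  assumes X: "\<And>\<tau>. a \<le> \<tau> \<Longrightarrow> \<tau> \<le> b \<Longrightarrow> X \<tau> = x0 + (if s \<le> \<tau> then integral {s..\<tau>} g else - integral {\<tau>..s} g)"
    and s: "s = a \<or> s = b" and int: "g integrable_on {a..b}"
    and t: "a \<le> \<tau>1" "\<tau>1 \<le> \<tau>2" "\<tau>2 \<le> b"
  shows "X \<tau>2 - X \<tau>1 = integral {\<tau>1..\<tau>2} g"
proof -
  have ab: "a \<le> b" using t by auto
  show ?thesis
  proof (cases "s = a")
    case True
    have i2: "g integrable_on {s..\<tau>2}" by (rule integrable_on_subinterval[OF int]) (use t True in auto)
    have "integral {s..\<tau>2} g = integral {s..\<tau>1} g + integral {\<tau>1..\<tau>2} g"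
      using Henstock_Kurzweil_Integration.integral_combine[of s \<tau>1 \<tau>2 g] i2 t True by auto
    then show ?thesis using X[of \<tau>1] X[of \<tau>2] t True by auto
  next
    case False
    then have sb: "s = b" using s by auto
    show ?thesis
    proof (cases "\<tau>1 = s")
      case True then have "\<tau>2 = s" using t sb by auto
      then show ?thesis using True by simp
    next
      case False
      then have t1: "\<tau>1 < s" using t sb by auto
      have i1: "g integrable_on {\<tau>1..s}" by (rule integrable_on_subinterval[OF int]) (use t sb in auto)
      have c: "integral {\<tau>1..s} g = integral {\<tau>1..\<tau>2} g + integral {\<tau>2..s} g"
        using Henstock_Kurzweil_Integration.integral_combine[of \<tau>1 \<tau>2 s g] i1 t sb by auto
      have X1: "X \<tau>1 = x0 - integral {\<tau>1..s} g" using X[of \<tau>1] t t1 by auto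
      have X2: "X \<tau>2 = x0 - integral {\<tau>2..s} g"
      proof (cases "\<tau>2 = s")
        case True then show ?thesis using X[of \<tau>2] t by simp
      next
        case False then show ?thesis using X[of \<tau>2] t sb by auto
      qed
      show ?thesis unfolding X1 X2 c by (simp add: algebra_simps)
    qed
  qed
qed

lemma Cm_bounds:
  fixes v :: "pt \<Rightarrow> pt"
  assumes H: "H1 n m" and cm: "Cm_space m v"
  shows "norm (v p) \<le> Cm_norm m v"
    and "p \<noteq> q \<Longrightarrow> norm (v p - v q) \<le> Cm_norm m v * (dist p q * (m (inverse (dist p q)) + 1))"
    and "Cm_norm m v \<ge> 0"
proof -
  define Q where "Q = {norm (v x - v y) / (dist x y * (m (inverse (dist x y)) + 1)) | x y. x \<noteq> y}"
  have bQ: "bdd_above Q" using cm unfolding Cm_space_def Q_def by auto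
  have den: "dist x y * (m (inverse (dist x y)) + 1) > 0" if "x \<noteq> y" for x y :: pt
    using that m_basic(1)[OF H, of "inverse (dist x y)"] by (intro mult_pos_pos) auto
  obtain z :: pt where z: "norm z = 1" using vector_choose_size[of 1] by auto
  then have z0: "z \<noteq> 0" by auto
  have "norm (v z - v 0) / (dist z 0 * (m (inverse (dist z 0)) + 1)) \<in> Q" unfolding Q_def using z0 by blast
  moreover have "norm (v z - v 0) / (dist z 0 * (m (inverse (dist z 0)) + 1)) \<ge> 0"
    using den[OF z0] by simp
  ultimately have Q0: "Sup Q \<ge> 0" using cSup_upper[OF _ bQ] by (meson order_trans)
  have br: "bdd_above (range (\<lambda>x. norm (v x)))"
    using cm unfolding Cm_space_def bounded_iff bdd_above_def by auto
  have sup1: "norm (v w) \<le> (SUP x. norm (v x))" for w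
    by (rule cSUP_upper[OF _ br]) simp
  have cn: "Cm_norm m v = (SUP x. norm (v x)) + Sup Q" unfolding Cm_norm_def Q_def ..
  show "norm (v p) \<le> Cm_norm m v" using sup1[of p] Q0 cn by simp
  show "Cm_norm m v \<ge> 0" using sup1[of p] Q0 cn norm_ge_zero[of "v p"] by linarith
  assume pq: "p \<noteq> q"
  have "norm (v p - v q) / (dist p q * (m (inverse (dist p q)) + 1)) \<le> Sup Q"
    by (rule cSup_upper[OF _ bQ]) (use pq in \<open>auto simp: Q_def\<close>)
  also have "\<dots> \<le> Cm_norm m v" using cn sup1[of p] norm_ge_zero[of "v p"] by linarith
  finally show "norm (v p - v q) \<le> Cm_norm m v * (dist p q * (m (inverse (dist p q)) + 1))"
    using den[OF pq] by (simp add: pos_divide_le_eq)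
qed



theorem lemma4p7:
  fixes m :: "real \<Rightarrow> real" and n :: nat
    and u :: "pt \<Rightarrow> real \<Rightarrow> pt" and \<Phi> :: "real \<Rightarrow> real \<Rightarrow> pt \<Rightarrow> pt"
  assumes n: "n \<ge> 1"
    and h1: "H1 n m" and h2a: "H2a m" and osg: "Osg m"
    and u_Cm: "\<And>t. t \<ge> 0 \<Longrightarrow> Cm_space m (\<lambda>x. u x t)"
    and u_L1: "set_integrable lborel {0..} (\<lambda>t. Cm_norm m (\<lambda>x. u x t))"
    and flow_int: "\<And>t s x. t \<ge> 0 \<Longrightarrow> s \<ge> 0 \<Longrightarrow>
        interval_lebesgue_integrable lborel (ereal s) (ereal t) (\<lambda>\<tau>. u (\<Phi> \<tau> s x) \<tau>)"
    and flow: "\<And>t s x. t \<ge> 0 \<Longrightarrow> s \<ge> 0 \<Longrightarrow>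
        \<Phi> t s x = x + (LBINT \<tau>=s..t. u (\<Phi> \<tau> s x) \<tau>)"
    and ts: "t \<ge> 0" "s \<ge> 0" and xy: "x \<noteq> y"
  shows "inverse (dist (\<Phi> t s x) (\<Phi> t s y)) \<ge>
           Ht_inv m (Ht m (inverse (dist x y)) - \<bar>LBINT \<tau>=s..t. Cm_norm m (\<lambda>z. u z \<tau>)\<bar>) \<and>
         dist (\<Phi> t s x) (\<Phi> t s y) \<le>
           dist x y * exp ((m (inverse (dist x y)) + 1) * \<bar>LBINT \<tau>=s..t. Cm_norm m (\<lambda>z. u z \<tau>)\<bar>)"
proof -
  define U where "U = (\<lambda>\<tau>. Cm_norm m (\<lambda>z. u z \<tau>))"
  define a where "a = min s t"
  define b where "b = max s t"
  have ab: "a \<le> b" "0 \<le> a" "s = a \<or> s = b" "a \<le> s" "s \<le> b" "a \<le> t" "t \<le> b"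
    unfolding a_def b_def using ts by auto
  define X where "X = (\<lambda>\<tau>. \<Phi> \<tau> s x)"
  define Y where "Y = (\<lambda>\<tau>. \<Phi> \<tau> s y)"
  define gx where "gx = (\<lambda>\<tau>. u (X \<tau>) \<tau>)"
  define gy where "gy = (\<lambda>\<tau>. u (Y \<tau>) \<tau>)"
  have repr: "\<Phi> \<tau> s z = z + (if s \<le> \<tau> then integral {s..\<tau>} (\<lambda>\<sigma>. u (\<Phi> \<sigma> s z) \<sigma>)
                 else - integral {\<tau>..s} (\<lambda>\<sigma>. u (\<Phi> \<sigma> s z) \<sigma>))" if "\<tau> \<ge> 0" for \<tau> z
    using flow[OF that ts(2), of z] lbint_hk(1)[OF flow_int[OF that ts(2), of z]] by simp
  have intg: "(\<lambda>\<sigma>. u (\<Phi> \<sigma> s z) \<sigma>) integrable_on {a..b}" for z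
    using lbint_hk(2)[OF flow_int[OF ts(1) ts(2), of z]] unfolding a_def b_def .
  have Xd: "X \<tau>2 - X \<tau>1 = integral {\<tau>1..\<tau>2} gx" if "a \<le> \<tau>1" "\<tau>1 \<le> \<tau>2" "\<tau>2 \<le> b" for \<tau>1 \<tau>2
    unfolding gx_def X_def
    by (rule diff_formula[OF _ ab(3) intg[of x] that, of _ x]) (use repr ab in auto)
  have Yd: "Y \<tau>2 - Y \<tau>1 = integral {\<tau>1..\<tau>2} gy" if "a \<le> \<tau>1" "\<tau>1 \<le> \<tau>2" "\<tau>2 \<le> b" for \<tau>1 \<tau>2
    unfolding gy_def Y_def
    by (rule diff_formula[OF _ ab(3) intg[of y] that, of _ y]) (use repr ab in auto)
  have intgx: "gx integrable_on {\<tau>1..\<tau>2}" "gy integrable_on {\<tau>1..\<tau>2}"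
    if "a \<le> \<tau>1" "\<tau>2 \<le> b" for \<tau>1 \<tau>2
    using integrable_on_subinterval[OF intg[of x], of \<tau>1 \<tau>2] integrable_on_subinterval[OF intg[of y], of \<tau>1 \<tau>2] that
    unfolding gx_def gy_def X_def Y_def by auto
  have UsetI: "set_integrable lborel {a..b} U"
    using set_integrable_subset[OF u_L1, of "{a..b}"] ab unfolding U_def by auto
  have intU: "U integrable_on {a..b}" using set_borel_integral_eq_integral(1)[OF UsetI] .
  have intU': "U integrable_on {\<tau>1..\<tau>2}" if "a \<le> \<tau>1" "\<tau>2 \<le> b" for \<tau>1 \<tau>2
    using integrable_on_subinterval[OF intU, of \<tau>1 \<tau>2] that by auto
  have Upos: "U \<sigma> \<ge> 0" if "\<sigma> \<ge> 0" for \<sigma>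
    using Cm_bounds(3)[OF h1 u_Cm[OF that]] unfolding U_def .
  have Ubnd: "norm (u p \<sigma>) \<le> U \<sigma>" if "\<sigma> \<ge> 0" for p \<sigma>
    using Cm_bounds(1)[OF h1 u_Cm[OF that]] unfolding U_def .
  have Ulip: "norm (u p \<sigma> - u q \<sigma>) \<le> U \<sigma> * om m (dist p q)" if "\<sigma> \<ge> 0" "p \<noteq> q" for p q \<sigma>
    using Cm_bounds(2)[OF h1 u_Cm[OF that(1)] that(2)] unfolding U_def om_def .
  define W where "W = (\<lambda>\<tau>. integral {a..\<tau>} U)"
  have Wd: "W \<tau>2 - W \<tau>1 = integral {\<tau>1..\<tau>2} U" if "a \<le> \<tau>1" "\<tau>1 \<le> \<tau>2" "\<tau>2 \<le> b" for \<tau>1 \<tau>2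
    using Henstock_Kurzweil_Integration.integral_combine[of a \<tau>1 \<tau>2 U] intU'[of a \<tau>2] that
    unfolding W_def by (auto simp: algebra_simps)
  have monoW: "W \<tau>1 \<le> W \<tau>2" if "a \<le> \<tau>1" "\<tau>1 \<le> \<tau>2" "\<tau>2 \<le> b" for \<tau>1 \<tau>2
  proof -
    have "0 \<le> integral {\<tau>1..\<tau>2} U"
      by (rule integral_nonneg[OF intU'[of \<tau>1 \<tau>2]]) (use that ab Upos in auto)
    then show ?thesis using Wd[OF that] by simp
  qed
  have contW: "continuous_on {a..b} W" unfolding W_def by (rule indefinite_integral_continuous_1[OF intU])
  have Xb: "norm (X \<tau>2 - X \<tau>1) \<le> W \<tau>2 - W \<tau>1" "norm (Y \<tau>2 - Y \<tau>1) \<le> W \<tau>2 - W \<tau>1"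
    if "a \<le> \<tau>1" "\<tau>1 \<le> \<tau>2" "\<tau>2 \<le> b" for \<tau>1 \<tau>2
  proof -
    have "norm (integral {\<tau>1..\<tau>2} gx) \<le> integral {\<tau>1..\<tau>2} U"
      by (rule integral_norm_bound_integral[OF intgx(1) intU']) (use that ab Ubnd in \<open>auto simp: gx_def\<close>)
    then show "norm (X \<tau>2 - X \<tau>1) \<le> W \<tau>2 - W \<tau>1" using Xd[OF that] Wd[OF that] by simp
    have "norm (integral {\<tau>1..\<tau>2} gy) \<le> integral {\<tau>1..\<tau>2} U"
      by (rule integral_norm_bound_integral[OF intgx(2) intU']) (use that ab Ubnd in \<open>auto simp: gy_def\<close>)
    then show "norm (Y \<tau>2 - Y \<tau>1) \<le> W \<tau>2 - W \<tau>1" using Yd[OF that] Wd[OF that] by simp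
  qed
  define d where "d = (\<lambda>\<tau>. dist (X \<tau>) (Y \<tau>))"
  have dlip0: "\<bar>d \<tau>2 - d \<tau>1\<bar> \<le> 2 * (W \<tau>2 - W \<tau>1)" if "a \<le> \<tau>1" "\<tau>1 \<le> \<tau>2" "\<tau>2 \<le> b" for \<tau>1 \<tau>2
  proof -
    have "\<bar>d \<tau>2 - d \<tau>1\<bar> \<le> norm ((X \<tau>2 - Y \<tau>2) - (X \<tau>1 - Y \<tau>1))"
      unfolding d_def dist_norm by (rule norm_triangle_ineq3)
    also have "\<dots> \<le> norm (X \<tau>2 - X \<tau>1) + norm (Y \<tau>2 - Y \<tau>1)"
      by (rule order_trans[OF _ norm_triangle_ineq4]) (simp add: algebra_simps)
    finally show ?thesis using Xb[OF that] by simp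
  qed
  have dlip: "\<bar>d \<tau>2 - d \<tau>1\<bar> \<le> 2 * \<bar>W \<tau>2 - W \<tau>1\<bar>" if "a \<le> \<tau>1" "\<tau>1 \<le> b" "a \<le> \<tau>2" "\<tau>2 \<le> b" for \<tau>1 \<tau>2
  proof (cases "\<tau>1 \<le> \<tau>2")
    case True then show ?thesis using dlip0[of \<tau>1 \<tau>2] that by simp
  next
    case False then show ?thesis using dlip0[of \<tau>2 \<tau>1] that by (simp add: abs_minus_commute)
  qed
  have contd: "continuous_on {a..b} d"
    unfolding continuous_on_iff
  proof (intro ballI allI impI)
    fix \<tau> e :: real assume \<tau>: "\<tau> \<in> {a..b}" and e: "e > 0"
    obtain \<delta> where \<delta>: "\<delta> > 0" "\<forall>\<tau>'\<in>{a..b}. dist \<tau>' \<tau> < \<delta> \<longrightarrow> dist (W \<tau>') (W \<tau>) < e / 2"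
      using contW \<tau> e unfolding continuous_on_iff by (meson half_gt_zero)
    show "\<exists>\<delta>>0. \<forall>\<tau>'\<in>{a..b}. dist \<tau>' \<tau> < \<delta> \<longrightarrow> dist (d \<tau>') (d \<tau>) < e"
    proof (intro exI[of _ \<delta>] conjI ballI impI)
      fix \<tau>' assume \<tau>': "\<tau>' \<in> {a..b}" "dist \<tau>' \<tau> < \<delta>"
      then have "\<bar>W \<tau>' - W \<tau>\<bar> < e / 2" using \<delta> by (auto simp: dist_real_def)
      moreover have "\<bar>d \<tau>' - d \<tau>\<bar> \<le> 2 * \<bar>W \<tau>' - W \<tau>\<bar>" using dlip[of \<tau> \<tau>'] \<tau> \<tau>' by auto
      ultimately show "dist (d \<tau>') (d \<tau>) < e" by (simp add: dist_real_def)
    qed (use \<delta> in auto)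
  qed
  have step: "\<bar>d \<tau>2 - d \<tau>1\<bar> \<le> M * (W \<tau>2 - W \<tau>1)"
    if t: "a \<le> \<tau>1" "\<tau>1 \<le> \<tau>2" "\<tau>2 \<le> b"
      and hyp: "\<And>\<sigma>. \<tau>1 \<le> \<sigma> \<Longrightarrow> \<sigma> \<le> \<tau>2 \<Longrightarrow> d \<sigma> > 0 \<and> om m (d \<sigma>) \<le> M" for \<tau>1 \<tau>2 M
  proof -
    have "\<bar>d \<tau>2 - d \<tau>1\<bar> \<le> norm ((X \<tau>2 - Y \<tau>2) - (X \<tau>1 - Y \<tau>1))"
      unfolding d_def dist_norm by (rule norm_triangle_ineq3)
    also have "(X \<tau>2 - Y \<tau>2) - (X \<tau>1 - Y \<tau>1) = (X \<tau>2 - X \<tau>1) - (Y \<tau>2 - Y \<tau>1)" by (simp add: algebra_simps)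
    also have "\<dots> = integral {\<tau>1..\<tau>2} (\<lambda>\<sigma>. gx \<sigma> - gy \<sigma>)"
      using Xd[OF t] Yd[OF t] integral_diff[OF intgx(1) intgx(2), of \<tau>1 \<tau>2] t by auto
    also have "norm \<dots> \<le> integral {\<tau>1..\<tau>2} (\<lambda>\<sigma>. M * U \<sigma>)"
    proof (rule integral_norm_bound_integral)
      show "(\<lambda>\<sigma>. gx \<sigma> - gy \<sigma>) integrable_on {\<tau>1..\<tau>2}"
        using integrable_diff[OF intgx(1) intgx(2)] t by auto
      show "(\<lambda>\<sigma>. M * U \<sigma>) integrable_on {\<tau>1..\<tau>2}"
        using integrable_on_cmult_left[OF intU'[of \<tau>1 \<tau>2]] t by auto
      fix \<sigma> assume "\<sigma> \<in> {\<tau>1..\<tau>2}"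
      then have \<sigma>: "\<tau>1 \<le> \<sigma>" "\<sigma> \<le> \<tau>2" "\<sigma> \<ge> 0" using t ab by auto
      have h: "d \<sigma> > 0" "om m (d \<sigma>) \<le> M" using hyp[OF \<sigma>(1,2)] by auto
      then have ne: "X \<sigma> \<noteq> Y \<sigma>" unfolding d_def by auto
      have "norm (gx \<sigma> - gy \<sigma>) \<le> U \<sigma> * om m (d \<sigma>)"
        unfolding gx_def gy_def d_def using Ulip[OF \<sigma>(3) ne] .
      also have "\<dots> \<le> U \<sigma> * M" by (rule mult_left_mono[OF h(2) Upos[OF \<sigma>(3)]])
      finally show "norm (gx \<sigma> - gy \<sigma>) \<le> M * U \<sigma>" by (simp add: mult.commute)
    qed
    also have "\<dots> = M * (W \<tau>2 - W \<tau>1)" using Wd[OF t] by simp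
    finally show ?thesis .
  qed
  have dnn: "d \<tau> \<ge> 0" for \<tau> unfolding d_def by simp
  have ds: "d s = dist x y" unfolding d_def X_def Y_def using flow[OF ts(2) ts(2)] by simp
  have dspos: "d s > 0" using ds xy by simp
  have blow: "\<And>B. \<exists>\<delta>>0. \<forall>r. 0 < r \<longrightarrow> r < \<delta> \<longrightarrow> FF m r > B" using FF_blow[OF h1 osg] by blast
  have stepA: "\<And>\<tau>1 \<tau>2 M. a \<le> \<tau>1 \<Longrightarrow> \<tau>1 \<le> \<tau>2 \<Longrightarrow> \<tau>2 \<le> b \<Longrightarrow>
       (\<And>\<sigma>. \<tau>1 \<le> \<sigma> \<Longrightarrow> \<sigma> \<le> \<tau>2 \<Longrightarrow> d \<sigma> > 0 \<and> om m (d \<sigma>) \<le> M) \<Longrightarrow>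
       \<bar>d \<tau>2 - d \<tau>1\<bar> \<le> M * (W \<tau>2 - W \<tau>1)"
    by (rule step)
  have monoA: "\<And>x y. a \<le> x \<Longrightarrow> x \<le> y \<Longrightarrow> y \<le> b \<Longrightarrow> W x \<le> W y"
    by (rule monoW)
  have dnnA: "\<And>\<tau>. a \<le> \<tau> \<Longrightarrow> \<tau> \<le> b \<Longrightarrow> d \<tau> \<ge> 0" by (rule dnn)
  have key: "d t > 0 \<and> \<bar>FF m (d t) - FF m (d s)\<bar> \<le> \<bar>W t - W s\<bar>"
  proof (cases "s \<le> t")
    case True
    then have as: "a = s" unfolding a_def by auto
    have da: "d a > 0" using dspos as by simp
    have "d t > 0 \<and> \<bar>FF m (d t) - FF m (d a)\<bar> \<le> W t - W a"
      by (rule abstract_fwd[OF h1 ab(1) contd monoA dnnA da stepA blow ab(6) ab(7)])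
    then have "d t > 0 \<and> \<bar>FF m (d t) - FF m (d s)\<bar> \<le> W t - W s" using as by simp
    then show ?thesis by linarith
  next
    case False
    then have bs: "b = s" unfolding b_def by auto
    have db: "d b > 0" using dspos bs by simp
    have "d t > 0 \<and> \<bar>FF m (d t) - FF m (d b)\<bar> \<le> W b - W t"
      by (rule abstract_bwd[OF h1 ab(1) contd monoA dnnA db stepA blow ab(6) ab(7)])
    then have "d t > 0 \<and> \<bar>FF m (d t) - FF m (d s)\<bar> \<le> W s - W t" using bs by simp
    then show ?thesis by linarith
  qed
  have LU: "(LBINT \<tau>=s..t. Cm_norm m (\<lambda>z. u z \<tau>)) = W t - W s"
  proof -
    have sub: "{s<..<t} \<subseteq> {0..}" "{t<..<s} \<subseteq> {0..}" using ts by auto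
    have ii: "interval_lebesgue_integrable lborel (ereal s) (ereal t) U"
      unfolding interval_lebesgue_integrable_def
      using set_integrable_subset[OF u_L1 _ sub(1)] set_integrable_subset[OF u_L1 _ sub(2)]
      unfolding U_def by auto
    have "(LBINT \<tau>=s..t. U \<tau>) = (if s \<le> t then integral {s..t} U else - integral {t..s} U)"
      using lbint_hk(1)[OF ii] .
    also have "\<dots> = W t - W s"
    proof (cases "s \<le> t")
      case True then show ?thesis using Wd[of s t] ab by simp
    next
      case False then show ?thesis using Wd[of t s] ab by simp
    qed
    finally show ?thesis unfolding U_def .
  qed
  define I where "I = \<bar>W t - W s\<bar>"
  define D0 where "D0 = dist x y"
  define Dt where "Dt = dist (\<Phi> t s x) (\<Phi> t s y)"
  have D0: "D0 > 0" unfolding D0_def using xy by simp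
  have Dt: "Dt > 0" and kk: "\<bar>FF m Dt - FF m D0\<bar> \<le> I"
    using key ds unfolding Dt_def D0_def I_def d_def X_def Y_def by auto
  have I0: "I \<ge> 0" unfolding I_def by simp
  have c1: "inverse Dt \<ge> Ht_inv m (Ht m (inverse D0) - I)"
  proof -
    define Yv where "Yv = Ht m (inverse D0) - I"
    have HD0: "Ht m (inverse D0) = FF m D0" unfolding Ht_FF by simp
    have HDt: "Ht m (inverse Dt) = FF m Dt" unfolding Ht_FF by simp
    have le: "Yv \<le> Ht m (inverse Dt)" unfolding Yv_def HD0 HDt using kk by linarith
    obtain R0 where R0: "R0 > 0" "Ht m R0 = Yv" using Ht_exists[OF h1 _ le] Dt by auto
    have "Ht_inv m Yv = R0" by (rule Ht_inv_eq[OF h1 R0])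
    moreover have "R0 \<le> inverse Dt"
    proof (rule ccontr)
      assume "\<not> R0 \<le> inverse Dt"
      then have "Ht m (inverse Dt) < Ht m R0" using Ht_strict[OF h1, of "inverse Dt" R0] Dt by simp
      then show False using R0 le by simp
    qed
    ultimately show ?thesis unfolding Yv_def by simp
  qed
  have c2: "Dt \<le> D0 * exp ((m (inverse D0) + 1) * I)"
  proof -
    define c where "c = m (inverse D0) + 1"
    have c: "c > 0" unfolding c_def using m_basic(1)[OF h1, of "inverse D0"] D0 by simp
    show ?thesis
    proof (cases "Dt \<le> D0")
      case True
      have "1 \<le> exp (c * I)" using c I0 by simp
      then have "D0 \<le> D0 * exp (c * I)" using D0 by simp
      then show ?thesis using True unfolding c_def by simp
    next
      case False
      have "FF m Dt + ln Dt / c \<le> FF m D0 + ln D0 / c"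
        using FF_log[OF h1 D0, of Dt] False unfolding c_def by simp
      then have "(ln Dt - ln D0) / c \<le> I" using kk by (simp add: diff_divide_distrib)
      then have "ln Dt - ln D0 \<le> c * I" using c by (simp add: pos_divide_le_eq mult.commute)
      then have "exp (ln Dt) \<le> exp (ln D0 + c * I)" by simp
      then have "Dt \<le> D0 * exp (c * I)" using Dt D0 by (simp add: exp_add)
      then show ?thesis unfolding c_def by simp
    qed
  qed
  show ?thesis using c1 c2 LU unfolding I_def D0_def Dt_def by simp
qed


end
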